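(* Let $d\le n'\le n$ be integers. There exist hypergraphs $H=(V,E)$ with $|V|=n$, all edges of size $d$, and $|E|=\binom{n'}{d}$, such that every non-adaptive generalized group testing solution for $H$ has size $\Omega\!\left(\min\{n',\, d\log|E|/\log d\}\right)=\Omega\!\left(\min\{n',\, d^2\log n'/\log d\}\right)$.
   Context: A set $T\subseteq V$ (a "test") separates two sets $A,B\subseteq V$ if exactly one of $A\cap T$, $B\cap T$ is empty. A non-adaptive generalized group testing solution for a hypergraph $H=(V,E)$ is a family $\mathcal{T}$ of subsets of $V$ such that for every two distinct $A,B\in E$ some $T\in\mathcal{T}$ separates $A$ and $B$. The $\Omega(\cdot)$ hides an absolute constant. *)

theory Defs
  imports Complex_Main
begin

definition separates :: "'a set \<Rightarrow> 'a set \<Rightarrow> 'a set \<Rightarrow> bool" where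
  "separates T A B \<longleftrightarrow> ((A \<inter> T = {}) \<noteq> (B \<inter> T = {}))"

definition ngt_solution :: "'a set \<Rightarrow> 'a set set \<Rightarrow> 'a set set \<Rightarrow> bool" where
  "ngt_solution V E \<T> \<longleftrightarrow> (\<forall>T\<in>\<T>. T \<subseteq> V) \<and>
     (\<forall>A\<in>E. \<forall>B\<in>E. A \<noteq> B \<longrightarrow> (\<exists>T\<in>\<T>. separates T A B))"

end

theory Submission
  imports Defs
begin


lemma split_small:
  "finite A \<Longrightarrow> card A \<le> s*k \<Longrightarrow> \<exists>Q. finite Q \<and> card Q \<le> s \<and> \<Union>Q = A \<and> (\<forall>q\<in>Q. card q \<le> k)"
proof (induction s arbitrary: A)
  case 0
  then show ?case by (intro exI[of _ "{}"]) auto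
next
  case (Suc s)
  obtain B where B: "B \<subseteq> A" "card B = min k (card A)"
    using obtain_subset_with_card_n[of "min k (card A)" A] by auto
  have "card (A - B) \<le> s * k"
    using Suc.prems B by (simp add: card_Diff_subset finite_subset)
  then obtain Q where Q: "finite Q" "card Q \<le> s" "\<Union>Q = A - B" "\<forall>q\<in>Q. card q \<le> k"
    using Suc.IH[of "A - B"] Suc.prems by auto
  show ?case
  proof (intro exI[of _ "insert B Q"] conjI)
    show "card (insert B Q) \<le> Suc s" using Q card_insert_le_m1
      by (metis Suc_le_mono card_insert_if le_SucI)
  qed (use Q B in auto)
qed

lemma private_subset:
  fixes F :: "'i \<Rightarrow> 'x set"
  assumes "finite (F i)" "i \<in> I" "card (F i) \<le> s*k"
    and cov: "\<forall>J \<subseteq> I - {i}. card J \<le> s \<longrightarrow> \<not> F i \<subseteq> \<Union>(F ` J)"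
  shows "\<exists>P \<subseteq> F i. card P \<le> k \<and> (\<forall>j\<in>I-{i}. \<not> P \<subseteq> F j)"
proof (rule ccontr)
  assume na: "\<not> ?thesis"
  obtain Q where Q: "finite Q" "card Q \<le> s" "\<Union>Q = F i" "\<forall>q\<in>Q. card q \<le> k"
    using split_small[OF assms(1) assms(3)] by auto
  have "\<forall>q\<in>Q. \<exists>j\<in>I-{i}. q \<subseteq> F j"
  proof
    fix q assume q: "q \<in> Q"
    have "q \<subseteq> F i" using q Q(3) by blast
    moreover have "card q \<le> k" using q Q(4) by blast
    ultimately show "\<exists>j\<in>I-{i}. q \<subseteq> F j" using na by blast
  qed
  then obtain g where g: "\<forall>q\<in>Q. g q \<in> I-{i} \<and> q \<subseteq> F (g q)" by metis
  have "card (g ` Q) \<le> card Q" by (rule card_image_le[OF Q(1)])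
  then have "card (g ` Q) \<le> s" using Q(2) by linarith
  moreover have "g ` Q \<subseteq> I - {i}" using g by auto
  moreover have "F i \<subseteq> \<Union>(F ` (g ` Q))"
  proof
    fix x assume "x \<in> F i"
    then obtain q where "q \<in> Q" "x \<in> q" using Q(3) by blast
    then show "x \<in> \<Union>(F ` (g ` Q))" using g by blast
  qed
  ultimately show False using cov[rule_format, of "g ` Q"] by blast
qed

lemma cf_bound:
  fixes F :: "'i \<Rightarrow> 'x set"
  assumes "finite X" "finite I" "\<forall>i\<in>I. F i \<subseteq> X" "s \<ge> 1"
    "\<forall>i\<in>I. \<forall>J \<subseteq> I - {i}. card J \<le> s \<longrightarrow> \<not> F i \<subseteq> \<Union>(F ` J)"
    "card X \<le> k * (\<Sum>j\<le>s. j)"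
  shows "card I \<le> (s - 1) + card {P. P \<subseteq> X \<and> card P \<le> k}"
  using assms
proof (induction s arbitrary: X I F)
  case 0
  then show ?case by simp
next
  case (Suc s)
  have finN: "finite {P. P \<subseteq> X \<and> card P \<le> k}" using Suc.prems(1) by simp
  show ?case
  proof (cases "\<exists>i\<in>I. card (F i) > Suc s * k")
    case True
    then obtain i where i: "i \<in> I" "card (F i) > Suc s * k" by auto
    have sub: "F i \<subseteq> X" using Suc.prems i by auto
    have cX: "card X = card (X - F i) + card (F i)"
      using sub Suc.prems(1) by (metis card_Diff_subset finite_subset card_mono le_add_diff_inverse2)
    have sumS: "(\<Sum>j\<le>Suc s. j) = (\<Sum>j\<le>s. j) + Suc s" by simp
    have s0: "s \<ge> 1"
    proof (rule ccontr)
      assume "\<not> s \<ge> 1" then have "s = 0" by simp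
      then show False using Suc.prems(6) cX i by simp
    qed
    have cX': "card (X - F i) \<le> k * (\<Sum>j\<le>s. j)"
      using Suc.prems(6) cX i sumS by (simp add: algebra_simps)
    define F' where "F' = (\<lambda>j. F j - F i)"
    have cov': "\<forall>j\<in>I - {i}. \<forall>J \<subseteq> (I - {i}) - {j}. card J \<le> s \<longrightarrow> \<not> F' j \<subseteq> \<Union>(F' ` J)"
    proof (intro ballI allI impI)
      fix j J assume j: "j \<in> I - {i}" and J: "J \<subseteq> (I - {i}) - {j}" "card J \<le> s"
      show "\<not> F' j \<subseteq> \<Union>(F' ` J)"
      proof
        assume "F' j \<subseteq> \<Union>(F' ` J)"
        then have "F j \<subseteq> \<Union>(F ` (insert i J))" unfolding F'_def by blast
        moreover have "insert i J \<subseteq> I - {j}" using J j i by auto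
        moreover have "card (insert i J) \<le> Suc s"
          by (rule card_insert_le_m1) (use J in auto)
        moreover have "j \<in> I" using j by simp
        ultimately show False using Suc.prems(5)[rule_format, of j "insert i J"] by blast
      qed
    qed
    have "card (I - {i}) \<le> (s - 1) + card {P. P \<subseteq> X - F i \<and> card P \<le> k}"
      using Suc.IH[of "X - F i" "I - {i}" F'] Suc.prems cov' cX' s0 unfolding F'_def by auto
    moreover have "card {P. P \<subseteq> X - F i \<and> card P \<le> k} \<le> card {P. P \<subseteq> X \<and> card P \<le> k}"
      by (rule card_mono[OF finN]) auto
    moreover have "card I = card (I - {i}) + 1"
      using card_Suc_Diff1[OF Suc.prems(2) i(1)] by simp
    ultimately show ?thesis using s0 by simp
  next
    case False
    have "\<forall>i\<in>I. \<exists>P \<subseteq> F i. card P \<le> k \<and> (\<forall>j\<in>I-{i}. \<not> P \<subseteq> F j)"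
    proof
      fix i assume i: "i \<in> I"
      show "\<exists>P \<subseteq> F i. card P \<le> k \<and> (\<forall>j\<in>I-{i}. \<not> P \<subseteq> F j)"
        by (rule private_subset[of F i I "Suc s" k])
          (use i False Suc.prems in \<open>auto intro: finite_subset simp: mult.commute\<close>)
    qed
    then obtain P where P: "\<forall>i\<in>I. P i \<subseteq> F i \<and> card (P i) \<le> k \<and> (\<forall>j\<in>I-{i}. \<not> P i \<subseteq> F j)"
      by metis
    have "inj_on P I"
    proof (rule inj_onI)
      fix a b assume "a \<in> I" "b \<in> I" "P a = P b"
      then show "a = b" using P by (metis Diff_iff singletonD)
    qed
    moreover have "P ` I \<subseteq> {P. P \<subseteq> X \<and> card P \<le> k}" using P Suc.prems by blast
    ultimately have "card I \<le> card {P. P \<subseteq> X \<and> card P \<le> k}"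
      using card_inj_on_le[OF _ _ finN] by blast
    then show ?thesis by simp
  qed
qed



lemma exp_partial: "(x::real) \<ge> 0 \<Longrightarrow> (\<Sum>i\<le>k. x^i / fact i) \<le> exp x"
proof -
  assume x: "x \<ge> 0"
  have "(\<lambda>n. x^n /\<^sub>R fact n) sums exp x" by (rule exp_converges)
  then have s: "summable (\<lambda>n. x^n / fact n)" and e: "exp x = (\<Sum>n. x^n / fact n)"
    by (auto simp: sums_iff divide_inverse_commute scaleR_conv_of_real)
  show ?thesis unfolding e
    by (rule sum_le_suminf[OF s]) (use x in auto)
qed

lemma count_small:
  assumes "finite X"
  shows "card {P. P \<subseteq> X \<and> card P \<le> k} \<le> (\<Sum>i\<le>k. card X choose i)"
proof -
  have "{P. P \<subseteq> X \<and> card P \<le> k} = (\<Union>i\<in>{..k}. {P. P \<subseteq> X \<and> card P = i})" by auto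
  then have "card {P. P \<subseteq> X \<and> card P \<le> k} \<le> (\<Sum>i\<le>k. card {P. P \<subseteq> X \<and> card P = i})"
    using card_UN_le[of "{..k}" "\<lambda>i. {P. P \<subseteq> X \<and> card P = i}"] by simp
  also have "\<dots> = (\<Sum>i\<le>k. card X choose i)" using n_subsets[OF assms] by simp
  finally show ?thesis .
qed

lemma sum_choose_bound:
  assumes "1 \<le> k" "k \<le> t"
  shows "real (\<Sum>i\<le>k. t choose i) \<le> (real t / real k)^k * exp (real k)"
proof -
  have q: "real t / real k \<ge> 1" using assms by simp
  have "real (\<Sum>i\<le>k. t choose i) = (\<Sum>i\<le>k. real (t choose i))" by simp
  also have "\<dots> \<le> (\<Sum>i\<le>k. (real t / real k)^k * (real k ^ i / fact i))"
  proof (rule sum_mono)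
    fix i assume i: "i \<in> {..k}"
    have "real (t choose i) * fact i \<le> real t ^ i"
      using binomial_fact_pow[of t i] by (metis of_nat_fact of_nat_le_iff of_nat_mult of_nat_power)
    then have "real (t choose i) \<le> real t ^ i / fact i" by (simp add: field_simps)
    also have "real t ^ i = (real t / real k)^i * real k ^ i"
      using assms by (simp add: power_divide)
    also have "(real t / real k)^i \<le> (real t / real k)^k"
      using q i by (intro power_increasing) auto
    finally show "real (t choose i) \<le> (real t / real k)^k * (real k ^ i / fact i)"
      by (simp add: divide_right_mono mult_right_mono)
  qed
  also have "\<dots> = (real t / real k)^k * (\<Sum>i\<le>k. real k ^ i / fact i)"
    by (simp add: sum_distrib_left)
  also have "\<dots> \<le> (real t / real k)^k * exp (real k)"
    using q by (intro mult_left_mono exp_partial) auto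
  finally show ?thesis .
qed

lemma info_bound:
  assumes "ngt_solution V E T" "finite T"
  shows "card E \<le> 2 ^ card T"
proof -
  let ?g = "\<lambda>A. {S\<in>T. A \<inter> S \<noteq> {}}"
  have "inj_on ?g E"
  proof (rule inj_onI)
    fix A B assume AB: "A \<in> E" "B \<in> E" "?g A = ?g B"
    show "A = B"
    proof (rule ccontr)
      assume "A \<noteq> B"
      then obtain S where "S \<in> T" "separates S A B" using assms AB unfolding ngt_solution_def by blast
      then show False using AB(3) unfolding separates_def by blast
    qed
  qed
  moreover have "?g ` E \<subseteq> Pow T" by auto
  ultimately have "card E \<le> card (Pow T)" using card_inj_on_le assms(2) by blast
  then show ?thesis using assms(2) by (simp add: card_Pow)
qed

lemma extend_set:
  assumes "finite B" "A \<subseteq> B" "card A \<le> m" "m \<le> card B"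
  shows "\<exists>S. A \<subseteq> S \<and> S \<subseteq> B \<and> card S = m"
proof -
  have "card (B - A) = card B - card A" using assms by (simp add: card_Diff_subset finite_subset)
  then have le: "m - card A \<le> card (B - A)" using assms by simp
  obtain C where C: "C \<subseteq> B - A" "card C = m - card A"
    using obtain_subset_with_card_n[OF le] by blast
  have "card (A \<union> C) = card A + card C"
    using C assms by (intro card_Un_disjoint) (auto intro: finite_subset)
  then show ?thesis using C assms by (intro exI[of _ "A \<union> C"]) auto
qed



lemma gauss2: "2 * (\<Sum>j\<le>r. j) = r * (r + 1::nat)"
  by (induction r) auto

lemma bad_unique:
  fixes U :: "nat set" and T :: "nat set set"
  assumes finU: "finite U" "d + 1 \<le> card U" "1 \<le> d" "2*r \<le> d - 1"
    and sep: "\<forall>A B. A \<subseteq> U \<and> card A = d \<and> B \<subseteq> U \<and> card B = d \<and> A \<noteq> B \<longrightarrow> (\<exists>S\<in>T. separates S A B)"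
    and x: "x \<in> U" "Rx \<subseteq> U - {x}" "card Rx \<le> r" "{S\<in>T. x\<in>S} \<subseteq> \<Union>((\<lambda>z. {S\<in>T. z\<in>S}) ` Rx)"
    and y: "y \<in> U" "Ry \<subseteq> U - {y}" "card Ry \<le> r" "{S\<in>T. y\<in>S} \<subseteq> \<Union>((\<lambda>z. {S\<in>T. z\<in>S}) ` Ry)"
    and xy: "x \<noteq> y"
  shows False
proof -
  define S0 where "S0 = (Rx \<union> Ry) - {x, y}"
  have finR: "finite Rx" "finite Ry" using x y finU by (auto intro: finite_subset)
  have "card S0 \<le> card (Rx \<union> Ry)" unfolding S0_def using finR by (intro card_mono) auto
  also have "\<dots> \<le> card Rx + card Ry" by (rule card_Un_le)
  finally have cS0: "card S0 \<le> d - 1" using x y finU by linarith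
  have cU: "card (U - {x, y}) = card U - 2" using x y xy finU by (simp add: card_Diff_subset)
  have "S0 \<subseteq> U - {x,y}" unfolding S0_def using x y by auto
  moreover have "d - 1 \<le> card (U - {x,y})" using cU finU by simp
  ultimately obtain S where S: "S0 \<subseteq> S" "S \<subseteq> U - {x,y}" "card S = d - 1"
    using extend_set[of "U - {x,y}" S0 "d - 1"] cS0 finU by blast
  have finS: "finite S" using S finU by (auto intro: finite_subset)
  define A where "A = insert x S"
  define B where "B = insert y S"
  have xS: "x \<notin> S" "y \<notin> S" using S by auto
  have cA: "card A = d" unfolding A_def using S finS finU xS by simp
  have cB: "card B = d" unfolding B_def using S finS finU xS by simp
  have AB: "A \<noteq> B" unfolding A_def B_def using S xy by auto
  have "A \<subseteq> U" "B \<subseteq> U" unfolding A_def B_def using S x y by auto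
  then obtain Q where Q: "Q \<in> T" "separates Q A B" using sep cA cB AB by blast
  show False
  proof (cases "A \<inter> Q = {}")
    case True
    then have "B \<inter> Q \<noteq> {}" using Q unfolding separates_def by auto
    then have "y \<in> Q" "S \<inter> Q = {}" "x \<notin> Q" using True unfolding A_def B_def by auto
    then obtain z where "z \<in> Ry" "z \<in> Q" using y(4) Q(1) by blast
    then show False using \<open>S \<inter> Q = {}\<close> \<open>x \<notin> Q\<close> S y(2) unfolding S0_def by blast
  next
    case False
    then have "B \<inter> Q = {}" using Q unfolding separates_def by auto
    then have "x \<in> Q" "S \<inter> Q = {}" "y \<notin> Q" using False unfolding A_def B_def by auto
    then obtain z where "z \<in> Rx" "z \<in> Q" using x(4) Q(1) by blast
    then show False using \<open>S \<inter> Q = {}\<close> \<open>y \<notin> Q\<close> S x(2) unfolding S0_def by blast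
  qed
qed



lemma lower_main:
  fixes d n' n :: nat and T :: "nat set set"
  assumes d3: "3 \<le> d" and dn: "d + 1 \<le> n'" and nn: "n' \<le> n"
    and sol: "ngt_solution {0..<n} {A. A \<subseteq> {0..<n'} \<and> card A = d} T"
  shows "real n' \<le> 6 * real (card T) \<or>
         real d ^ 2 * ln (real n') \<le> 384 * ln (real d) * real (card T)"
proof -
  define U where "U = {0..<n'}"
  define t where "t = card T"
  have "T \<subseteq> Pow {0..<n}" using sol unfolding ngt_solution_def by auto
  then have finT: "finite T" by (rule finite_subset) simp
  define r where "r = (d - 1) div 2"
  have r1: "1 \<le> r" and r2: "2*r \<le> d - 1" using d3 unfolding r_def by auto
  have r4: "d \<le> 4*r" using d3 unfolding r_def by presburger
  define F where "F = (\<lambda>z. {S\<in>T. z\<in>S})"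
  define bad where "bad = (\<lambda>z. \<exists>R \<subseteq> U - {z}. card R \<le> r \<and> F z \<subseteq> \<Union>(F ` R))"
  define G where "G = {z\<in>U. \<not> bad z}"
  have finU: "finite U" and cardU: "card U = n'" unfolding U_def by auto
  have sep: "\<forall>A B. A \<subseteq> U \<and> card A = d \<and> B \<subseteq> U \<and> card B = d \<and> A \<noteq> B \<longrightarrow> (\<exists>S\<in>T. separates S A B)"
    using sol unfolding ngt_solution_def U_def by auto
  have "card {z\<in>U. bad z} \<le> Suc 0"
  proof (subst card_le_Suc0_iff_eq)
    show "finite {z\<in>U. bad z}" using finU by simp
    show "\<forall>a\<in>{z\<in>U. bad z}. \<forall>b\<in>{z\<in>U. bad z}. a = b"
    proof (intro ballI, rule ccontr)
      fix a b assume a: "a \<in> {z\<in>U. bad z}" and b: "b \<in> {z\<in>U. bad z}" and ab: "a \<noteq> b"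
      obtain Ra where Ra: "Ra \<subseteq> U - {a}" "card Ra \<le> r" "F a \<subseteq> \<Union>(F ` Ra)" using a unfolding bad_def by auto
      obtain Rb where Rb: "Rb \<subseteq> U - {b}" "card Rb \<le> r" "F b \<subseteq> \<Union>(F ` Rb)" using b unfolding bad_def by auto
      show False
        by (rule bad_unique[OF finU _ _ r2 sep, of a Ra b Rb])
          (use a b ab Ra Rb dn cardU d3 in \<open>auto simp: F_def\<close>)
    qed
  qed
  moreover have "card U = card G + card {z\<in>U. bad z}"
    unfolding G_def using finU by (subst card_Un_disjoint[symmetric]) (auto intro: arg_cong[where f=card])
  ultimately have cG: "n' - 1 \<le> card G" using cardU by linarith
  define C where "C = (\<Sum>j\<le>r. j)"
  have C2: "2 * C = r * (r + 1)" unfolding C_def by (rule gauss2)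
  have C1: "1 \<le> C" using C2 r1 by (cases r) auto
  define k where "k = (LEAST k. t \<le> k * C)"
  have tk: "t \<le> k * C" unfolding k_def by (rule LeastI[of _ t]) (use C1 in simp)
  have kt: "k \<le> t" unfolding k_def by (rule Least_le) (use C1 in simp)
  define N where "N = card {P. P \<subseteq> T \<and> card P \<le> k}"
  have cfb: "card G \<le> (r - 1) + N" unfolding N_def
  proof (rule cf_bound[OF finT _ _ r1])
    show "finite G" unfolding G_def using finU by simp
    show "\<forall>i\<in>G. F i \<subseteq> T" unfolding F_def by auto
    show "card T \<le> k * (\<Sum>j\<le>r. j)" using tk unfolding t_def C_def .
    show "\<forall>i\<in>G. \<forall>J\<subseteq>G - {i}. card J \<le> r \<longrightarrow> \<not> F i \<subseteq> \<Union> (F ` J)"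
      unfolding G_def bad_def by blast
  qed
  have NN: "N \<le> (\<Sum>i\<le>k. t choose i)" unfolding N_def t_def by (rule count_small[OF finT])
  have Nge: "n' - r \<le> N" using cfb cG r1 by linarith
  have k1: "1 \<le> k"
  proof (rule ccontr)
    assume "\<not> 1 \<le> k" then have "k = 0" by simp
    then have "N \<le> 1" using NN by simp
    then show False using Nge r2 dn r1 by arith
  qed
  have km: "(k - 1) * C < t" unfolding k_def
    by (rule not_le_imp_less, rule not_less_Least) (use k1 in \<open>simp add: k_def\<close>)
  have Nr: "real n' / 2 \<le> real N" using Nge r2 dn by linarith
  have Nb: "real N \<le> (real t / real k)^k * exp (real k)"
    using NN sum_choose_bound[OF k1 kt] by (meson of_nat_le_iff order_trans)
  show ?thesis
  proof (cases "k = 1")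
    case True
    then have "real n' / 2 \<le> real t * exp 1" using Nr Nb by simp
    moreover have "real t * exp 1 \<le> real t * 3" using exp_le by (intro mult_left_mono) auto
    ultimately show ?thesis unfolding t_def by simp
  next
    case False
    then have k2: "2 \<le> k" using k1 by simp
    have tpos: "0 < t" using km by linarith
    have n4: "4 \<le> n'" using d3 dn by simp
    have Npos: "0 < real N" using Nr n4 by linarith
    have lnN: "ln (real n' / 2) \<le> ln (real N)" using Nr n4 by (intro ln_mono) auto
    also have "\<dots> \<le> ln ((real t / real k)^k * exp (real k))"
      using Nb Npos by (intro ln_mono) auto
    also have "\<dots> = real k * ln (real t / real k) + real k"
      using tpos k1 by (simp add: ln_mult ln_realpow)
    also have "\<dots> \<le> real k * ln (real C) + real k"
    proof -
      have "real t / real k \<le> real C" using tk k1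
        by (simp add: divide_le_eq mult.commute of_nat_mult[symmetric] del: of_nat_mult)
      then have "ln (real t / real k) \<le> ln (real C)" using tpos k1 by (intro ln_mono) auto
      then show ?thesis using k1 by (intro add_right_mono mult_left_mono) auto
    qed
    finally have L1: "ln (real n' / 2) \<le> real k * (1 + ln (real C))" by (simp add: algebra_simps)
    have kC: "real k * real C \<le> 2 * real t"
    proof -
      have "k \<le> 2 * (k - 1)" using k2 by linarith
      then have "k * C \<le> (2 * (k - 1)) * C" by (rule mult_le_mono1)
      then have "k * C \<le> 2 * ((k - 1) * C)" by simp
      then have "k * C \<le> 2 * t" using km by linarith
      then show ?thesis by (metis of_nat_le_iff of_nat_mult of_nat_numeral)
    qed
    have lnC0: "0 \<le> ln (real C)" using C1 by simp
    have L2: "real C * ln (real n' / 2) \<le> 2 * real t * (1 + ln (real C))"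
    proof -
      have "real C * ln (real n' / 2) \<le> real C * (real k * (1 + ln (real C)))"
        using L1 by (intro mult_left_mono) auto
      also have "\<dots> = (real k * real C) * (1 + ln (real C))" by (simp add: algebra_simps)
      also have "\<dots> \<le> (2 * real t) * (1 + ln (real C))"
        using kC lnC0 by (intro mult_right_mono) auto
      finally show ?thesis .
    qed
    have lnd1: "1 \<le> ln (real d)"
    proof -
      have "exp 1 \<le> real d" using exp_le d3 by linarith
      then have "ln (exp 1) \<le> ln (real d)" by (intro ln_mono) auto
      then show ?thesis by simp
    qed
    have Cd2: "real C \<le> real d ^ 2"
    proof -
      have "r * (r + 1) \<le> d * d" using r2 d3 by (intro mult_mono) auto
      then have "C \<le> d * d" using C2 by linarith
      then show ?thesis by (simp add: power2_eq_square) (metis of_nat_le_iff of_nat_mult)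
    qed
    have lnC: "ln (real C) \<le> 2 * ln (real d)"
    proof -
      have "ln (real C) \<le> ln (real d ^ 2)" using Cd2 C1 by (intro ln_mono) auto
      then show ?thesis using d3 by (simp add: ln_realpow)
    qed
    have Cd: "real d ^ 2 \<le> 32 * real C"
    proof -
      have "d * d \<le> (4*r) * (4*r)" using r4 by (intro mult_mono) auto
      also have "\<dots> \<le> 16 * (r * (r + 1))" by (simp add: algebra_simps)
      finally have "d * d \<le> 32 * C" using C2 by linarith
      then show ?thesis by (simp add: power2_eq_square) (metis of_nat_le_iff of_nat_mult of_nat_numeral)
    qed
    have lnn: "ln (real n') \<le> 2 * ln (real n' / 2)"
    proof -
      have "ln 4 \<le> ln (real n')" using n4 by (intro ln_mono) auto
      moreover have "ln (4::real) = 2 * ln 2"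
      proof -
        have "ln (4::real) = ln (2 ^ 2)" by simp
        also have "\<dots> = 2 * ln 2" by (subst ln_realpow) auto
        finally show ?thesis .
      qed
      moreover have "ln (real n' / 2) = ln (real n') - ln 2" using n4 by (simp add: ln_div)
      ultimately show ?thesis by linarith
    qed
    have lnn0: "0 \<le> ln (real n')" using n4 by simp
    have "real d ^ 2 * ln (real n') \<le> (32 * real C) * (2 * ln (real n' / 2))"
      using Cd lnn lnn0 by (intro mult_mono) auto
    also have "\<dots> = 64 * (real C * ln (real n' / 2))" by simp
    also have "\<dots> \<le> 64 * (2 * real t * (1 + ln (real C)))" using L2 by simp
    also have "\<dots> \<le> 64 * (2 * real t * (3 * ln (real d)))"
      using lnC lnd1 by (intro mult_left_mono) auto
    also have "\<dots> = 384 * ln (real d) * real (card T)" by (simp add: t_def)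
    finally show ?thesis by simp
  qed
qed



lemma lower_all:
  fixes d n' n :: nat and T :: "nat set set"
  assumes dn: "d \<le> n'" and nn: "n' \<le> n"
    and sol: "ngt_solution {0..<n} {A. A \<subseteq> {0..<n'} \<and> card A = d} T"
  shows "(1/400) * min (real n') (real d * ln (real (n' choose d)) / ln (real d)) \<le> real (card T)"
proof -
  define X where "X = real d * ln (real (n' choose d)) / ln (real d)"
  define t where "t = card T"
  have "T \<subseteq> Pow {0..<n}" using sol unfolding ngt_solution_def by auto
  then have finT: "finite T" by (rule finite_subset) simp
  have cpos: "1 \<le> n' choose d" using dn by (simp add: Suc_leI)
  have lnc0: "0 \<le> ln (real (n' choose d))" using cpos by simp
  have M: "min (real n') X \<le> X" by simp
  have Mn: "min (real n') X \<le> real n'" by simp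
  consider "d \<le> 1" | "n' = d" | "d = 2" | "3 \<le> d" "d + 1 \<le> n'" using dn by linarith
  then have "min (real n') X \<le> 400 * real t"
  proof cases
    case 1
    then have "X = 0" unfolding X_def by (cases d) auto
    then show ?thesis using M by simp
  next
    case 2
    then have "X = 0" unfolding X_def by simp
    then show ?thesis using M by simp
  next
    case 3
    have "card {A. A \<subseteq> {0..<n'} \<and> card A = d} \<le> 2 ^ t"
      unfolding t_def by (rule info_bound[OF sol finT])
    then have "n' choose d \<le> 2 ^ t" using n_subsets[of "{0..<n'}" d] by simp
    then have "real (n' choose d) \<le> 2 ^ t" by (metis of_nat_le_iff of_nat_numeral of_nat_power)
    then have "ln (real (n' choose d)) \<le> ln (2 ^ t)" using cpos dn by (intro ln_mono) auto
    then have "ln (real (n' choose d)) \<le> real t * ln 2" by (simp add: ln_realpow)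
    then have "X \<le> 2 * real t" unfolding X_def using 3 by (simp add: divide_le_eq)
    then show ?thesis using M by linarith
  next
    case 4
    have "real n' \<le> 6 * real t \<or> real d ^ 2 * ln (real n') \<le> 384 * ln (real d) * real t"
      unfolding t_def by (rule lower_main[OF 4 nn sol])
    then show ?thesis
    proof
      assume "real n' \<le> 6 * real t" then show ?thesis using Mn by linarith
    next
      assume A: "real d ^ 2 * ln (real n') \<le> 384 * ln (real d) * real t"
      have lnd: "0 < ln (real d)" using 4 by simp
      have "n' choose d \<le> n' ^ d" by (rule binomial_le_pow[OF dn])
      then have "real (n' choose d) \<le> real n' ^ d" by (metis of_nat_le_iff of_nat_power)
      then have "ln (real (n' choose d)) \<le> ln (real n' ^ d)" using cpos dn by (intro ln_mono) auto
      also have "\<dots> = real d * ln (real n')" using 4 by (simp add: ln_realpow)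
      finally have "real d * ln (real (n' choose d)) \<le> real d * (real d * ln (real n'))"
        by (intro mult_left_mono) auto
      also have "\<dots> = real d ^ 2 * ln (real n')" by (simp add: power2_eq_square)
      also have "\<dots> \<le> 384 * ln (real d) * real t" by (rule A)
      finally have "X \<le> 384 * real t" unfolding X_def using lnd by (simp add: divide_le_eq mult_ac)
      then show ?thesis using M by linarith
    qed
  qed
  then show ?thesis unfolding X_def t_def by simp
qed

theorem claim5:
  shows "\<exists>c::real. c > 0 \<and>
    (\<forall>d n' n :: nat. d \<le> n' \<and> n' \<le> n \<longrightarrow>
      (\<exists>(V::nat set) (E::nat set set).
         finite V \<and> card V = n \<and> E \<subseteq> Pow V \<and> (\<forall>e\<in>E. card e = d) \<and>
         card E = n' choose d \<and>
         (\<forall>\<T>. ngt_solution V E \<T> \<longrightarrow>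
            c * min (real n') (real d * ln (real (card E)) / ln (real d)) \<le> real (card \<T>))))"
proof (intro exI[of _ "1/400"] conjI allI impI)
  fix d n' n :: nat assume a: "d \<le> n' \<and> n' \<le> n"
  define E where "E = {A. A \<subseteq> {0..<n'} \<and> card A = d}"
  have cE: "card E = n' choose d" unfolding E_def using n_subsets[of "{0..<n'}" d] by simp
  show "\<exists>(V::nat set) (E::nat set set).
         finite V \<and> card V = n \<and> E \<subseteq> Pow V \<and> (\<forall>e\<in>E. card e = d) \<and>
         card E = n' choose d \<and>
         (\<forall>\<T>. ngt_solution V E \<T> \<longrightarrow>
            (1/400) * min (real n') (real d * ln (real (card E)) / ln (real d)) \<le> real (card \<T>))"
  proof (intro exI[of _ "{0..<n}"] exI[of _ E] conjI allI impI)
    show "E \<subseteq> Pow {0..<n}" unfolding E_def using a by auto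
    fix \<T> assume "ngt_solution {0..<n} E \<T>"
    then show "(1/400) * min (real n') (real d * ln (real (card E)) / ln (real d)) \<le> real (card \<T>)"
      using lower_all[of d n' n \<T>] a cE unfolding E_def by simp
  qed (use cE in \<open>auto simp: E_def\<close>)
qed simp


end
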